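(* Let $T$ be an $n\times n$ complex matrix with distinct eigenvalues $\lambda_1,\dots,\lambda_n$. Let $u_1,\dots,u_n$ be unit eigenvectors of $T$ with $Tu_i=\lambda_iu_i$, and let $v_1,\dots,v_n$ be unit eigenvectors of $T^*$ with $T^*v_i=\overline{\lambda_i}v_i$. If $T$ is unitarily equivalent to a complex symmetric matrix, then $|\langle u_i,u_j\rangle|=|\langle v_i,v_j\rangle|$ for all $1\le i<j\le n$.
   Context: A complex symmetric matrix is a square complex matrix $S$ with $S=S^t$ (transpose). Two matrices $A,B\in M_n(\mathbb{C})$ are unitarily equivalent if $A=U^*BU$ for some unitary $U$. $\langle\cdot,\cdot\rangle$ is the standard inner product on $\mathbb{C}^n$. *)

theory Defs
  imports "HOL-Analysis.Analysis"
begin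

definition conj_transpose :: "complex ^ 'n ^ 'm \<Rightarrow> complex ^ 'm ^ 'n" where
  "conj_transpose A = (\<chi> i j. cnj (A $ j $ i))"

definition unitary_mat :: "complex ^ 'n ^ 'n \<Rightarrow> bool" where
  "unitary_mat U \<longleftrightarrow> conj_transpose U ** U = mat 1"

definition complex_symmetric :: "complex ^ 'n ^ 'n \<Rightarrow> bool" where
  "complex_symmetric S \<longleftrightarrow> transpose S = S"

definition unitarily_equivalent :: "complex ^ 'n ^ 'n \<Rightarrow> complex ^ 'n ^ 'n \<Rightarrow> bool" where
  "unitarily_equivalent A B \<longleftrightarrow> (\<exists>U. unitary_mat U \<and> A = conj_transpose U ** B ** U)"

definition cinner :: "complex ^ 'n \<Rightarrow> complex ^ 'n \<Rightarrow> complex" where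
  "cinner x y = (\<Sum>k\<in>UNIV. x $ k * cnj (y $ k))"

end

theory Submission
  imports Defs
begin



lemma mv_scale: "(A::'a::comm_ring_1^'n^'m) *v (c *s x) = c *s (A *v x)"
  by (simp add: vec_eq_iff matrix_vector_mult_def sum_distrib_left algebra_simps)

lemma mv_sum: "finite I \<Longrightarrow> (A::'a::comm_ring_1^'n^'m) *v (\<Sum>i\<in>I. f i) = (\<Sum>i\<in>I. A *v f i)"
  by (induction I rule: finite_induct) (auto simp: matrix_vector_right_distrib)

lemma cinner_scale_left: "cinner (c *s a) b = c * cinner a b"
  by (simp add: cinner_def sum_distrib_left mult.assoc)

lemma cinner_scale_right: "cinner a (c *s b) = cnj c * cinner a b"
  by (simp add: cinner_def sum_distrib_left algebra_simps)

lemma cinner_mv: "cinner (A *v a) b = cinner a (conj_transpose A *v b)"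
proof -
  have "cinner (A *v a) b = (\<Sum>k\<in>UNIV. \<Sum>l\<in>UNIV. A$k$l * a$l * cnj (b$k))"
    by (simp add: cinner_def matrix_vector_mult_def sum_distrib_right)
  also have "\<dots> = (\<Sum>l\<in>UNIV. \<Sum>k\<in>UNIV. A$k$l * a$l * cnj (b$k))"
    by (rule sum.swap)
  also have "\<dots> = cinner a (conj_transpose A *v b)"
    by (simp add: cinner_def matrix_vector_mult_def conj_transpose_def sum_distrib_left algebra_simps)
  finally show ?thesis .
qed

lemma ct_ct: "conj_transpose (conj_transpose A) = A"
  by (simp add: conj_transpose_def vec_eq_iff)

lemma ct_mult: "conj_transpose (A ** B) = conj_transpose B ** conj_transpose (A::complex^'n^'m)"
  by (simp add: conj_transpose_def vec_eq_iff matrix_matrix_mult_def mult.commute)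

definition cv :: "complex^'n \<Rightarrow> complex^'n" where "cv x = (\<chi> k. cnj (x$k))"
definition cm :: "complex^'n^'m \<Rightarrow> complex^'n^'m" where "cm M = (\<chi> i j. cnj (M$i$j))"

lemma cm_cv: "cm M *v cv x = cv (M *v x)"
  by (simp add: cm_def cv_def vec_eq_iff matrix_vector_mult_def)

lemma cv_scale: "cv (c *s x) = cnj c *s cv x"
  by (simp add: cv_def vec_eq_iff)

lemma cinner_cv: "cinner (cv a) (cv b) = cnj (cinner a b)"
  by (simp add: cinner_def cv_def)

lemma ct_sym: "transpose S = S \<Longrightarrow> conj_transpose S = cm S"
  by (simp add: conj_transpose_def cm_def vec_eq_iff transpose_def)

lemma cinner_zero: "cinner 0 0 = 0" by (simp add: cinner_def)

lemma eig_indep: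
  fixes A :: "complex^'n^'n" and w :: "'n \<Rightarrow> complex^'n"
  assumes mu: "inj mu" and nz: "\<And>i. w i \<noteq> 0" and eig: "\<And>i. A *v w i = mu i *s w i"
  shows "finite I \<Longrightarrow> (\<Sum>i\<in>I. c i *s w i) = 0 \<Longrightarrow> \<forall>i\<in>I. c i = 0"
proof (induction I arbitrary: c rule: finite_induct)
  case empty then show ?case by simp
next
  case (insert a I)
  have s: "c a *s w a + (\<Sum>i\<in>I. c i *s w i) = 0" using insert by simp
  have "A *v (c a *s w a + (\<Sum>i\<in>I. c i *s w i)) = 0" using s by simp
  hence s2: "(c a * mu a) *s w a + (\<Sum>i\<in>I. (c i * mu i) *s w i) = 0"
    using insert(1) by (simp add: matrix_vector_right_distrib mv_sum mv_scale eig mult.commute)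
  have "(\<Sum>i\<in>I. (c i * (mu i - mu a)) *s w i) = (c a * mu a) *s w a + (\<Sum>i\<in>I. (c i * mu i) *s w i) - mu a *s (c a *s w a + (\<Sum>i\<in>I. c i *s w i))"
    by (simp add: algebra_simps vector_ssub_ldistrib scalar_mult_eq_scaleR sum_subtractf vector_sadd_rdistrib
        vec.scale_sum_right vector_smult_assoc)
  also have "\<dots> = 0" using s s2 by simp
  finally have "\<forall>i\<in>I. c i * (mu i - mu a) = 0" using insert.IH[of "\<lambda>i. c i * (mu i - mu a)"] by simp
  moreover have "\<forall>i\<in>I. mu i \<noteq> mu a" using insert(2) mu by (metis injD)
  ultimately have ci: "\<forall>i\<in>I. c i = 0" by simp
  hence "c a *s w a = 0" using s by simp
  hence "c a = 0" using nz by (simp add: vec_eq_iff) (metis vec_eq_iff zero_index)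
  with ci show ?case by simp
qed

lemma eig_span:
  fixes A :: "complex^'n^'n" and w :: "'n \<Rightarrow> complex^'n"
  assumes mu: "inj mu" and nz: "\<And>i. w i \<noteq> 0" and eig: "\<And>i. A *v w i = mu i *s w i"
  shows "\<exists>c. y = (\<Sum>i\<in>UNIV. c i *s w i)"
proof -
  have injw: "inj w"
  proof (rule injI)
    fix i j assume ij: "w i = w j"
    have "mu i *s w i = A *v w i" by (rule eig[symmetric])
    also have "\<dots> = A *v w j" using ij by simp
    also have "\<dots> = mu j *s w j" by (rule eig)
    also have "\<dots> = mu j *s w i" using ij by simp
    finally have "mu i *s w i = mu j *s w i" .
    moreover obtain k where k: "w i $ k \<noteq> 0" using nz[of i] by (metis vec_eq_iff zero_index)
    ultimately have "mu i * w i $ k = mu j * w i $ k" by (metis vector_smult_component)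
    hence "mu i = mu j" using k by simp
    thus "i = j" using mu by (metis injD)
  qed
  let ?B = "range w"
  have sumB: "\<And>g. (\<Sum>v\<in>?B. g v) = (\<Sum>i\<in>UNIV. g (w i))"
    using injw by (simp add: sum.reindex)
  have ind: "vec.independent ?B"
    unfolding vec.independent_explicit
  proof (intro conjI allI impI)
    show "finite ?B" by simp
    fix c assume "(\<Sum>v\<in>?B. c v *s v) = 0"
    hence s0: "(\<Sum>i\<in>UNIV. c (w i) *s w i) = 0" by (simp add: sumB)
    have "\<forall>i\<in>UNIV. c (w i) = 0" by (rule eig_indep[OF mu nz eig finite_class.finite_UNIV s0])
    thus "\<forall>v\<in>?B. c v = 0" by auto
  qed
  have cardB: "card ?B = CARD('n)" using injw by (simp add: card_image)
  have "UNIV \<subseteq> vec.span ?B"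
  proof (rule vec.card_ge_dim_independent[OF _ ind])
    show "range w \<subseteq> UNIV" by simp
    show "vec.dim (UNIV::(complex^'n) set) \<le> card (range w)" unfolding cardB vec.dim_UNIV card_cart_basis by simp
  qed
  hence "y \<in> range (\<lambda>u. \<Sum>v\<in>?B. u v *s v)" using vec.span_finite[of ?B] by auto
  then obtain u where "y = (\<Sum>v\<in>?B. u v *s v)" by auto
  hence "y = (\<Sum>i\<in>UNIV. u (w i) *s w i)" by (simp add: sumB)
  thus ?thesis by (intro exI)
qed


lemma cinner_unitary:
  assumes "A ** conj_transpose A = mat 1"
  shows "cinner (conj_transpose A *v a) (conj_transpose A *v b) = cinner a b"
proof -
  have "cinner (conj_transpose A *v a) (conj_transpose A *v b) = cinner a (A *v (conj_transpose A *v b))"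
    by (simp add: cinner_mv ct_ct)
  also have "\<dots> = cinner a b" by (simp add: matrix_vector_mul_assoc assms)
  finally show ?thesis .
qed

theorem theorem1:
  fixes T :: "complex ^ 'n ^ 'n"
    and lam :: "'n \<Rightarrow> complex"
    and u v :: "'n \<Rightarrow> complex ^ 'n"
  assumes distinct_eigs: "inj lam"
    and u_unit: "\<And>i. cinner (u i) (u i) = 1"
    and u_eig: "\<And>i. T *v u i = lam i *s u i"
    and v_unit: "\<And>i. cinner (v i) (v i) = 1"
    and v_eig: "\<And>i. conj_transpose T *v v i = cnj (lam i) *s v i"
    and ue: "\<exists>S. complex_symmetric S \<and> unitarily_equivalent T S"
  shows "\<forall>i j. i \<noteq> j \<longrightarrow> cmod (cinner (u i) (u j)) = cmod (cinner (v i) (v j))"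
proof -
  obtain S U :: "complex^'n^'n" where Ssym: "Finite_Cartesian_Product.transpose S = S" and UHU: "conj_transpose U ** U = mat 1"
    and TU: "T = conj_transpose U ** S ** U"
    using ue unfolding complex_symmetric_def unitarily_equivalent_def unitary_mat_def by blast
  have UUH: "U ** conj_transpose U = mat 1" using UHU matrix_left_right_inverse by blast
  define z where "z i = U *v u i" for i
  have Sz: "S *v z i = lam i *s z i" for i
  proof -
    have "U *v (T *v u i) = (U ** conj_transpose U) *v (S *v (U *v u i))"
      by (simp add: TU matrix_vector_mul_assoc matrix_mul_assoc)
    also have "\<dots> = S *v z i" by (simp add: UUH z_def)
    finally have "S *v z i = U *v (T *v u i)" by simp
    also have "\<dots> = lam i *s z i" by (simp add: u_eig mv_scale z_def)
    finally show ?thesis .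
  qed
  have TH: "conj_transpose T = conj_transpose U ** cm S ** U"
    by (simp add: TU ct_mult ct_ct ct_sym[OF Ssym] matrix_mul_assoc)
  define x where "x i = conj_transpose U *v cv (z i)" for i
  have xeig: "conj_transpose T *v x i = cnj (lam i) *s x i" for i
  proof -
    have "conj_transpose T *v x i = conj_transpose U *v (cm S *v ((U ** conj_transpose U) *v cv (z i)))"
      by (simp add: TH x_def matrix_vector_mul_assoc matrix_mul_assoc)
    also have "\<dots> = conj_transpose U *v cv (S *v z i)" by (simp add: UUH cm_cv)
    also have "\<dots> = cnj (lam i) *s x i" by (simp add: Sz cv_scale mv_scale x_def)
    finally show ?thesis .
  qed
  have xinner: "cinner (x i) (x j) = cnj (cinner (u i) (u j))" for i j
  proof -
    have "cinner (x i) (x j) = cinner (cv (z i)) (cv (z j))" unfolding x_def by (rule cinner_unitary[OF UUH])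
    also have "\<dots> = cnj (cinner (z i) (z j))" by (rule cinner_cv)
    also have "cinner (z i) (z j) = cinner (u i) (u j)"
      using cinner_unitary[of "conj_transpose U" "u i" "u j"] by (simp add: ct_ct UHU z_def)
    finally show ?thesis .
  qed
  have xnz: "x i \<noteq> 0" for i
  proof
    assume "x i = 0"
    hence "cinner (x i) (x i) = 0" by (simp add: cinner_def)
    thus False using xinner[of i i] u_unit[of i] by simp
  qed
  have muinj: "inj (\<lambda>i. cnj (lam i))" using distinct_eigs by (simp add: inj_def)
  have vx: "\<exists>c. v k = c *s x k \<and> cmod c = 1" for k
  proof -
    obtain d where vk: "v k = (\<Sum>i\<in>UNIV. d i *s x i)"
      using eig_span[OF muinj xnz xeig] by blast
    have e1: "conj_transpose T *v v k = (\<Sum>i\<in>UNIV. (d i * cnj (lam i)) *s x i)"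
      unfolding vk by (simp add: mv_sum mv_scale xeig vector_smult_assoc)
    have e2: "cnj (lam k) *s v k = (\<Sum>i\<in>UNIV. (cnj (lam k) * d i) *s x i)"
      unfolding vk by (simp add: vec.scale_sum_right vector_smult_assoc)
    have "(\<Sum>i\<in>UNIV. (d i * (cnj (lam i) - cnj (lam k))) *s x i)
        = (\<Sum>i\<in>UNIV. (d i * cnj (lam i)) *s x i - (cnj (lam k) * d i) *s x i)"
      by (rule sum.cong) (simp_all add: right_diff_distrib vector_sub_rdistrib mult.commute)
    also have "\<dots> = conj_transpose T *v v k - cnj (lam k) *s v k"
      unfolding e1 e2 by (rule sum_subtractf)
    also have "\<dots> = 0" by (simp add: v_eig)
    finally have dd: "\<forall>i\<in>UNIV. d i * (cnj (lam i) - cnj (lam k)) = 0"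
      by (rule eig_indep[OF muinj xnz xeig finite_class.finite_UNIV])
    have dz: "d i = 0" if ik: "i \<noteq> k" for i
    proof -
      have "lam i \<noteq> lam k" using ik distinct_eigs by (auto simp: inj_def)
      moreover have "d i * (cnj (lam i) - cnj (lam k)) = 0" using dd by simp
      ultimately show ?thesis by simp
    qed
    have "v k = (\<Sum>i\<in>UNIV. if i = k then d k *s x k else 0)"
      unfolding vk by (rule sum.cong) (auto simp: dz)
    hence vk2: "v k = d k *s x k" by simp
    have "1 = cinner (v k) (v k)" using v_unit by simp
    also have "\<dots> = d k * cnj (d k)" using xinner[of k k] u_unit[of k]
      by (simp add: vk2 cinner_scale_left cinner_scale_right)
    finally have "d k * cnj (d k) = 1" by simp
    hence "(cmod (d k))\<^sup>2 = 1" by (metis complex_mod_mult_cnj norm_one)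
    hence "cmod (d k) = 1" using norm_ge_zero[of "d k"] by (auto simp: power2_eq_1_iff)
    with vk2 show ?thesis by blast
  qed
  then obtain c where c: "\<And>k. v k = c k *s x k \<and> cmod (c k) = 1" by metis
  show ?thesis
  proof (intro allI impI)
    fix i j :: 'n
    have "cinner (v i) (v j) = c i * cnj (c j) * cnj (cinner (u i) (u j))"
      using c[of i] c[of j] by (simp add: cinner_scale_left cinner_scale_right xinner)
    thus "cmod (cinner (u i) (u j)) = cmod (cinner (v i) (v j))"
      using c[of i] c[of j] by (simp add: norm_mult)
  qed
qed

end
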